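(* Let $(G;+,\cdot)$ be a finite field of order $q$. Then the class of affine functions of arity at least $\max(q,3)+1$ over $(G;+,\cdot)$ is reconstructible: for every $n \geq \max(q,3)+1$, every affine $f\colon G^n\to G$ and every function $g \colon G^n \to G$ (not assumed affine) with $\operatorname{deck} g = \operatorname{deck} f$, we have $g \equiv f$.
   Context: A function $f\colon G^n\to G$ is affine if $f(x_1,\dots,x_n) = a_1x_1+\dots+a_nx_n+c$ for some $a_i,c\in G$. Identification minor: for $f\colon A^n\to B$ and $I=\{i,j\}$, $i<j$, $f_I\colon A^{n-1}\to B$ is $f_I(x_1,\dots,x_{n-1}) = f(x_1,\dots,x_{j-1},x_i,x_j,\dots,x_{n-1})$. Two functions $f,g\colon A^n\to B$ are equivalent, $f\equiv g$, if $f(x_1,\dots,x_n) = g(x_{\sigma(1)},\dots,x_{\sigma(n)})$ for some permutation $\sigma$ of $\{1,\dots,n\}$. The deck of $f$ is the multiset $\langle f_I/{\equiv} : I\rangle$ of equivalence classes of all $\binom n2$ identification minors of $f$. *)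

theory Defs
  imports Main "HOL-Library.Multiset" "HOL-Combinatorics.Permutations"
begin

text \<open>An n-ary function A^n -> B is modelled as a function on lists; only its values
  on lists of length n are relevant. Argument positions are 0-indexed.\<close>

definition affine_fun :: "nat \<Rightarrow> ('a::field list \<Rightarrow> 'a) \<Rightarrow> bool" where
  "affine_fun n f \<longleftrightarrow> (\<exists>a c. \<forall>xs. length xs = n \<longrightarrow> f xs = (\<Sum>i<n. a i * xs ! i) + c)"

text \<open>Identification minor f_I for I = {i,j}, i < j (0-indexed): the new argument list
  of length n-1 is x_0..x_{j-1}, then x_i inserted at position j, then x_j..x_{n-2}.\<close>
definition id_minor :: "('a list \<Rightarrow> 'b) \<Rightarrow> nat \<Rightarrow> nat \<Rightarrow> 'a list \<Rightarrow> 'b" where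
  "id_minor f i j xs = f (take j xs @ [xs ! i] @ drop j xs)"

definition fun_equiv :: "nat \<Rightarrow> ('a list \<Rightarrow> 'b) \<Rightarrow> ('a list \<Rightarrow> 'b) \<Rightarrow> bool" where
  "fun_equiv n f g \<longleftrightarrow> (\<exists>\<sigma>. \<sigma> permutes {..<n} \<and>
     (\<forall>xs. length xs = n \<longrightarrow> f xs = g (map (\<lambda>k. xs ! \<sigma> k) [0..<n])))"

definition equiv_class :: "nat \<Rightarrow> ('a list \<Rightarrow> 'b) \<Rightarrow> ('a list \<Rightarrow> 'b) set" where
  "equiv_class n f = {h. fun_equiv n h f}"

definition deck :: "nat \<Rightarrow> ('a list \<Rightarrow> 'b) \<Rightarrow> ('a list \<Rightarrow> 'b) set multiset" where
  "deck n f = image_mset (\<lambda>(i, j). equiv_class (n - 1) (id_minor f i j))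
      (mset_set {(i, j). i < j \<and> j < n})"

end

theory Submission
  imports Defs
begin

definition ev :: "nat \<Rightarrow> nat set \<Rightarrow> 'a::field list" where
  "ev N S = map (\<lambda>t. if t \<in> S then 1 else 0) [0..<N]"

lemma ev_len[simp]: "length (ev N S) = N" by (simp add: ev_def)
lemma ev_nth[simp]: "t < N \<Longrightarrow> ev N S ! t = (if t \<in> S then 1 else 0)" by (simp add: ev_def)

lemma sum_ev:
  fixes w :: "nat \<Rightarrow> 'a::field"
  assumes "S \<subseteq> {..<N}"
  shows "(\<Sum>t<N. w t * ev N S ! t) = sum w S"
proof -
  have "(\<Sum>t<N. w t * ev N S ! t) = (\<Sum>t<N. if t \<in> S then w t else 0)"
    by (rule sum.cong) auto
  also have "\<dots> = sum w ({..<N} \<inter> S)" by (simp add: sum.inter_restrict)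
  also have "{..<N} \<inter> S = S" using assms by auto
  finally show ?thesis .
qed

lemma regroup:
  fixes a :: "nat \<Rightarrow> 'a::comm_ring_1" and y :: "nat \<Rightarrow> 'a"
  assumes "\<And>k. k < n \<Longrightarrow> r k < m"
  shows "(\<Sum>k<n. a k * y (r k)) = (\<Sum>t<m. (\<Sum>k\<in>{k. k<n \<and> r k = t}. a k) * y t)"
proof -
  have "(\<Sum>k<n. a k * y (r k)) = (\<Sum>t<m. \<Sum>k\<in>{k\<in>{..<n}. r k = t}. a k * y (r k))"
    by (rule sum.group[symmetric]) (use assms in auto)
  also have "\<dots> = (\<Sum>t<m. (\<Sum>k\<in>{k. k<n \<and> r k = t}. a k) * y t)"
    by (rule sum.cong[OF refl]) (auto simp: sum_distrib_right intro!: sum.cong)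
  finally show ?thesis .
qed

lemma affine_subst:
  fixes h :: "'a::field list \<Rightarrow> 'a" and a :: "nat \<Rightarrow> 'a"
  assumes "\<And>k. k < n \<Longrightarrow> r k < m"
    and "\<And>ys. length ys = m \<Longrightarrow> h ys = (\<Sum>k<n. a k * ys ! r k) + c"
  shows "affine_fun m h"
  unfolding affine_fun_def
proof (intro exI allI impI)
  fix xs :: "'a list" assume "length xs = m"
  then show "h xs = (\<Sum>t<m. (\<Sum>k\<in>{k. k<n \<and> r k = t}. a k) * xs ! t) + c"
    using assms(2) regroup[OF assms(1), where a=a and y="(!) xs"] by simp
qed

definition rr :: "nat \<Rightarrow> nat \<Rightarrow> nat \<Rightarrow> nat" where
  "rr i j t = (if t < j then t else if t = j then i else t - 1)"

lemma rr_lt: "t < n \<Longrightarrow> i < j \<Longrightarrow> j < n \<Longrightarrow> rr i j t < n - 1"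
  by (auto simp: rr_def)

lemma rr_lt': "t < n \<Longrightarrow> i < j \<Longrightarrow> j < n \<Longrightarrow> rr i j t < n - Suc 0"
  by (auto simp: rr_def)

lemma ins_map:
  assumes "length ys = n - 1" "i < j" "j < n"
  shows "take j ys @ [ys!i] @ drop j ys = map (\<lambda>t. ys ! rr i j t) [0..<n]"
proof (rule nth_equalityI)
  show "length (take j ys @ [ys!i] @ drop j ys) = length (map (\<lambda>t. ys ! rr i j t) [0..<n])"
    using assms by auto
next
  fix t assume "t < length (take j ys @ [ys!i] @ drop j ys)"
  then have t: "t < n" using assms by auto
  show "(take j ys @ [ys!i] @ drop j ys) ! t = map (\<lambda>t. ys ! rr i j t) [0..<n] ! t"
    using assms t by (auto simp: nth_append rr_def min_def)
qed

lemma minor_form: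
  assumes "\<And>xs. length xs = n \<Longrightarrow> f xs = (\<Sum>k<n. a k * xs!k) + c"
    and "i < j" "j < n" "length ys = n - 1"
  shows "id_minor f i j ys = (\<Sum>t<n. a t * ys ! rr i j t) + c"
proof -
  have "id_minor f i j ys = f (map (\<lambda>t. ys ! rr i j t) [0..<n])"
    unfolding id_minor_def using ins_map[OF assms(4,2,3)] by simp
  also have "\<dots> = (\<Sum>t<n. a t * ys ! rr i j t) + c"
    by (subst assms(1)) auto
  finally show ?thesis .
qed

lemma fun_equiv_refl: "fun_equiv N h h"
  unfolding fun_equiv_def
  by (rule exI[of _ id]) (auto simp: permutes_id map_nth)

lemma equiv_subst:
  fixes a :: "nat \<Rightarrow> 'a::field" and n :: nat and r :: "nat \<Rightarrow> nat"
  assumes "fun_equiv N h h'"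
    and "\<And>ys. length ys = N \<Longrightarrow> h' ys = (\<Sum>k<n. a k * ys ! r k) + c"
    and "\<And>k. k < n \<Longrightarrow> r k < N"
  shows "\<exists>\<sigma>. \<sigma> permutes {..<N} \<and> (\<forall>ys. length ys = N \<longrightarrow> h ys = (\<Sum>k<n. a k * ys ! \<sigma> (r k)) + c)"
proof -
  obtain \<sigma> where s: "\<sigma> permutes {..<N}"
    and e: "\<And>xs. length xs = N \<Longrightarrow> h xs = h' (map (\<lambda>k. xs ! \<sigma> k) [0..<N])"
    using assms(1) unfolding fun_equiv_def by blast
  show ?thesis
  proof (intro exI conjI allI impI)
    fix ys :: "'a list" assume "length ys = N"
    then show "h ys = (\<Sum>k<n. a k * ys ! \<sigma> (r k)) + c"
      using e assms(2,3) by (auto intro!: sum.cong)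
  qed (rule s)
qed

definition del :: "nat \<Rightarrow> 'a list \<Rightarrow> 'a list" where
  "del l x = take l x @ drop (Suc l) x"

lemma del_len: "length x = n \<Longrightarrow> l < n \<Longrightarrow> length (del l x) = n - 1"
  by (simp add: del_def)

lemma del_nth: "length x = n \<Longrightarrow> l < n \<Longrightarrow> m < n - 1 \<Longrightarrow>
    del l x ! m = x ! (if m < l then m else Suc m)"
  by (auto simp: del_def nth_append min_def)

lemma minor_del:
  assumes "length x = n" "k < l" "l < n" "x ! k = x ! l"
  shows "id_minor g k l (del l x) = g x"
proof -
  have "take l (del l x) = take l x" using assms by (simp add: del_def)
  moreover have "drop l (del l x) = drop (Suc l) x" using assms by (simp add: del_def)
  moreover have "del l x ! k = x ! l" using assms del_nth[of x n l k] by auto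
  ultimately have "take l (del l x) @ [del l x ! k] @ drop l (del l x) = x"
    using assms id_take_nth_drop[of l x] by simp
  then show ?thesis unfolding id_minor_def by simp
qed

definition PP :: "nat \<Rightarrow> (nat \<times> nat) set" where
  "PP n = {(i, j). i < j \<and> j < n}"

lemma finite_PP[simp]: "finite (PP n)"
  by (rule finite_subset[of _ "{..<n} \<times> {..<n}"]) (auto simp: PP_def)

lemma deck_member:
  assumes "deck n g = deck n f" "i < j" "j < n"
  shows "\<exists>k l. k < l \<and> l < n \<and> fun_equiv (n-1) (id_minor g i j) (id_minor f k l)"
proof -
  have "(i, j) \<in># mset_set (PP n)" using assms finite_PP[of n] by (simp add: PP_def)
  then have "equiv_class (n - 1) (id_minor g i j) \<in># deck n g"
    unfolding deck_def PP_def by force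
  then have "equiv_class (n - 1) (id_minor g i j) \<in># deck n f" using assms by simp
  then obtain k l where kl: "(k, l) \<in> PP n"
    and eq: "equiv_class (n - 1) (id_minor g i j) = equiv_class (n - 1) (id_minor f k l)"
    using finite_PP[of n] unfolding deck_def PP_def by auto
  have "id_minor g i j \<in> equiv_class (n - 1) (id_minor g i j)"
    by (simp add: equiv_class_def fun_equiv_refl)
  then have "fun_equiv (n-1) (id_minor g i j) (id_minor f k l)"
    using eq by (metis mem_Collect_eq equiv_class_def)
  then show ?thesis using kl by (auto simp: PP_def)
qed

lemma lemH:
  fixes g :: "'a::field list \<Rightarrow> 'a"
  assumes aff: "affine_fun (n-1) (id_minor g k l)" and kl: "k < l" "l < n"
  shows "\<exists>w. \<forall>x. length x = n \<longrightarrow> x!k = x!l \<longrightarrow> g x = (\<Sum>t<n. w t * x!t) + g (ev n {})"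
proof -
  obtain \<beta> \<gamma> where bg: "\<And>ys. length ys = n-1 \<Longrightarrow> id_minor g k l ys = (\<Sum>i<n-1. \<beta> i * ys!i) + \<gamma>"
    using aff unfolding affine_fun_def by blast
  define s where "s m = (if m < l then m else Suc m)" for m
  define W where "W t = (\<Sum>m\<in>{m. m<n-1 \<and> s m = t}. \<beta> m)" for t
  have form: "g x = (\<Sum>t<n. W t * x!t) + \<gamma>" if x: "length x = n" "x!k = x!l" for x
  proof -
    have "g x = id_minor g k l (del l x)" using minor_del[OF x(1) kl x(2), where g=g] by simp
    also have "\<dots> = (\<Sum>i<n-1. \<beta> i * del l x ! i) + \<gamma>" using bg del_len[OF x(1) kl(2)] by simp
    also have "(\<Sum>i<n-1. \<beta> i * del l x ! i) = (\<Sum>i<n-1. \<beta> i * x ! (s i))"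
      using del_nth[OF x(1) kl(2)] by (auto simp: s_def intro!: sum.cong)
    also have "\<dots> = (\<Sum>t<n. W t * x!t)" unfolding W_def
      by (rule regroup[where y="(!) x"]) (auto simp: s_def)
    finally show ?thesis .
  qed
  have "g (ev n {}) = (\<Sum>t<n. W t * ev n {} ! t) + \<gamma>" using kl by (intro form) auto
  also have "(\<Sum>t<n. W t * ev n {} ! t) = 0" by (subst sum_ev) auto
  finally have "\<gamma> = g (ev n {})" by simp
  then show ?thesis using form by blast
qed

lemma split2:
  fixes F :: "nat \<Rightarrow> 'a::comm_monoid_add"
  assumes "k \<noteq> l" "k < n" "l < n"
  shows "(\<Sum>t<n. F t) = (\<Sum>t\<in>{..<n} - {k,l}. F t) + F k + F l"
proof -
  have "(\<Sum>t<n. F t) = (\<Sum>t\<in>{..<n} - {k,l}. F t) + sum F {k,l}"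
    by (rule sum.subset_diff) (use assms in auto)
  then show ?thesis using assms by (simp add: add.assoc)
qed

lemma lemHp:
  fixes g :: "'a::field list \<Rightarrow> 'a"
  assumes kl: "k < l" "l < n"
    and w: "\<And>x. length x = n \<Longrightarrow> x!k = x!l \<Longrightarrow> g x = (\<Sum>t<n. w t * x!t) + g (ev n {})"
    and x: "length x = n" "x!k = x!l"
  shows "g x = (\<Sum>t\<in>{..<n} - {k,l}. (g (ev n {t}) - g (ev n {})) * x!t)
              + (g (ev n {k,l}) - g (ev n {})) * x!k + g (ev n {})"
proof -
  have wt: "w t = g (ev n {t}) - g (ev n {})" if "t \<in> {..<n} - {k,l}" for t
  proof -
    have "g (ev n {t}) = (\<Sum>t'<n. w t' * ev n {t} ! t') + g (ev n {})"
      using that kl by (intro w) auto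
    also have "(\<Sum>t'<n. w t' * ev n {t} ! t') = w t" using that by (subst sum_ev) auto
    finally show ?thesis by simp
  qed
  have wkl: "w k + w l = g (ev n {k,l}) - g (ev n {})"
  proof -
    have "g (ev n {k,l}) = (\<Sum>t'<n. w t' * ev n {k,l} ! t') + g (ev n {})"
      using kl by (intro w) auto
    also have "(\<Sum>t'<n. w t' * ev n {k,l} ! t') = w k + w l" using kl by (subst sum_ev) auto
    finally show ?thesis by simp
  qed
  have "g x = (\<Sum>t<n. w t * x!t) + g (ev n {})" using w x by blast
  also have "(\<Sum>t<n. w t * x!t) = (\<Sum>t\<in>{..<n} - {k,l}. w t * x!t) + w k * x!k + w l * x!l"
    using kl by (intro split2) auto
  also have "(\<Sum>t\<in>{..<n} - {k,l}. w t * x!t) = (\<Sum>t\<in>{..<n} - {k,l}. (g (ev n {t}) - g (ev n {})) * x!t)"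
    using wt by (intro sum.cong) auto
  also have "(\<Sum>t\<in>{..<n} - {k,l}. (g (ev n {t}) - g (ev n {})) * x!t) + w k * x!k + w l * x!l
     = (\<Sum>t\<in>{..<n} - {k,l}. (g (ev n {t}) - g (ev n {})) * x!t) + (g (ev n {k,l}) - g (ev n {})) * x!k"
    using wkl x(2) by (simp add: algebra_simps flip: wkl)
  finally show ?thesis .
qed

lemma pigeon:
  fixes x :: "'a::finite list"
  assumes "card (UNIV::'a set) < length x"
  shows "\<exists>k l. k \<noteq> l \<and> k < length x \<and> l < length x \<and> x!k = x!l"
proof -
  have "\<not> distinct x"
  proof
    assume "distinct x"
    then have "length x = card (set x)" by (simp add: distinct_card)
    also have "\<dots> \<le> card (UNIV::'a set)" by (rule card_mono) auto
    finally show False using assms by simp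
  qed
  then show ?thesis by (auto simp: distinct_conv_nth)
qed

lemma two_free: "\<exists>k' l'. k' < (4::nat) \<and> l' < 4 \<and> k' \<noteq> l' \<and> k' \<noteq> k \<and> k' \<noteq> l \<and> l' \<noteq> k \<and> l' \<noteq> l"
proof (cases "k \<in> {0,1} \<or> l \<in> {0,1}")
  case True
  then consider "k \<in> {0,1}" | "l \<in> {0,1}" by blast
  then show ?thesis
  proof cases
    case 1
    show ?thesis
    proof (cases "l \<in> {2,3}")
      case True
      then show ?thesis using 1 by (rule_tac x="if l = 2 then 3 else 2" in exI, rule_tac x="if k = 0 then 1 else 0" in exI) auto
    next
      case False
      then show ?thesis using 1 by (rule_tac x=2 in exI, rule_tac x=3 in exI) auto
    qed
  next
    case 2
    show ?thesis
    proof (cases "k \<in> {2,3}")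
      case True
      then show ?thesis using 2 by (rule_tac x="if k = 2 then 3 else 2" in exI, rule_tac x="if l = 0 then 1 else 0" in exI) auto
    next
      case False
      then show ?thesis using 2 by (rule_tac x=2 in exI, rule_tac x=3 in exI) auto
    qed
  qed
next
  case False
  then show ?thesis by (rule_tac x=0 in exI, rule_tac x=1 in exI) auto
qed

lemma g_affine:
  fixes g :: "'a::{finite,field} list \<Rightarrow> 'a"
  assumes n4: "4 \<le> n" and nq: "card (UNIV::'a set) < n"
    and aff: "\<And>i j. i < j \<Longrightarrow> j < n \<Longrightarrow> affine_fun (n-1) (id_minor g i j)"
    and x: "length x = n"
  shows "g x = (\<Sum>t<n. (g (ev n {t}) - g (ev n {})) * x!t) + g (ev n {})"
proof -
  define G0 where "G0 = g (ev n {})"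
  define a' where "a' t = g (ev n {t}) - G0" for t
  have Hs: "g y = (\<Sum>t\<in>{..<n}-{k,l}. a' t * y!t) + (g (ev n {k,l}) - G0) * y!k + G0"
    if hyp: "k \<noteq> l" "k < n" "l < n" "length y = n" "y!k = y!l" for k l y
  proof (cases "k < l")
    case True
    obtain w where w: "\<forall>x. length x = n \<longrightarrow> x!k = x!l \<longrightarrow> g x = (\<Sum>t<n. w t * x!t) + g (ev n {})"
      using lemH[OF aff[OF True hyp(3)] True hyp(3)] by blast
    show ?thesis unfolding a'_def G0_def
      by (rule lemHp[where w=w, OF True hyp(3) _ hyp(4,5)]) (use w in blast)
  next
    case False
    then have lk: "l < k" using hyp by simp
    obtain w where w: "\<forall>x. length x = n \<longrightarrow> x!l = x!k \<longrightarrow> g x = (\<Sum>t<n. w t * x!t) + g (ev n {})"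
      using lemH[OF aff[OF lk hyp(2)] lk hyp(2)] by blast
    have "g y = (\<Sum>t\<in>{..<n}-{l,k}. a' t * y!t) + (g (ev n {l,k}) - G0) * y!l + G0"
      unfolding a'_def G0_def
      by (rule lemHp[where w=w, OF lk hyp(2) _ hyp(4)]) (use w hyp(5) in auto)
    then show ?thesis using hyp by (simp add: insert_commute)
  qed
  have E: "g (ev n {k,l}) = a' k + a' l + G0" if "k \<noteq> l" "k < n" "l < n" for k l
  proof -
    obtain k' l' where kl': "k' < 4" "l' < 4" "k' \<noteq> l'" "k' \<noteq> k" "k' \<noteq> l" "l' \<noteq> k" "l' \<noteq> l"
      using two_free[of k l] by blast
    have "g (ev n {k,l}) = (\<Sum>t\<in>{..<n}-{k',l'}. a' t * ev n {k,l} ! t)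
         + (g (ev n {k',l'}) - G0) * ev n {k,l} ! k' + G0"
      using kl' n4 by (intro Hs) auto
    also have "(g (ev n {k',l'}) - G0) * ev n {k,l} ! k' = 0" using kl' n4 by simp
    also have "(\<Sum>t\<in>{..<n}-{k',l'}. a' t * ev n {k,l} ! t) = (\<Sum>t\<in>{..<n}-{k',l'}. if t \<in> {k,l} then a' t else 0)"
      by (intro sum.cong) auto
    also have "\<dots> = sum a' (({..<n}-{k',l'}) \<inter> {k,l})" by (simp add: sum.inter_restrict)
    also have "({..<n}-{k',l'}) \<inter> {k,l} = {k,l}" using that kl' by auto
    finally show ?thesis using that by simp
  qed
  obtain k l where kl: "k \<noteq> l" "k < n" "l < n" "x!k = x!l" using pigeon[of x] nq x by auto
  have "g x = (\<Sum>t\<in>{..<n}-{k,l}. a' t * x!t) + (a' k + a' l) * x!k + G0"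
    using Hs[OF kl(1-3) x kl(4)] E[OF kl(1-3)] by simp
  also have "\<dots> = (\<Sum>t<n. a' t * x!t) + G0"
  proof -
    have "(a' k + a' l) * x!k = a' k * x!k + a' l * x!l" using kl(4) by (simp add: distrib_right)
    then show ?thesis using split2[OF kl(1-3), of "\<lambda>t. a' t * x!t"] by (simp add: add.assoc)
  qed
  finally show ?thesis unfolding a'_def G0_def .
qed

definition key :: "nat \<Rightarrow> ('a::field list \<Rightarrow> 'a) \<Rightarrow> 'a multiset" where
  "key N h = image_mset (\<lambda>m. h (ev N {m}) - h (ev N {})) (mset_set {..<N})"

definition Kc :: "nat \<Rightarrow> ('a::field list \<Rightarrow> 'a) set \<Rightarrow> 'a multiset" where
  "Kc N E = key N (SOME h. h \<in> E)"

lemma key_equiv: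
  assumes "fun_equiv N h h'"
  shows "key N h = key N h'"
proof -
  obtain \<sigma> where s: "\<sigma> permutes {..<N}"
    and e: "\<And>xs. length xs = N \<Longrightarrow> h xs = h' (map (\<lambda>k. xs ! \<sigma> k) [0..<N])"
    using assms unfolding fun_equiv_def by blast
  define F where "F m = h' (ev N {m}) - h' (ev N {})" for m
  have sl: "\<sigma> k < N" if "k < N" for k using permutes_in_image[OF s, of k] that by simp
  have e0: "h (ev N {}) = h' (ev N {})"
  proof -
    have "map (\<lambda>k. ev N {} ! \<sigma> k) [0..<N] = (ev N {} :: 'a list)"
      using sl by (auto simp: ev_def)
    then show ?thesis using e[of "ev N {}"] by (metis ev_len)
  qed
  have e1: "h (ev N {m}) = h' (ev N {inv \<sigma> m})" if "m < N" for m
  proof -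
    have "map (\<lambda>k. ev N {m} ! \<sigma> k) [0..<N] = (ev N {inv \<sigma> m} :: 'a list)"
      proof -
      have iv: "(\<sigma> t = m) = (t = inv \<sigma> m)" for t using permutes_inv_eq[OF s, of m t] by metis
      show ?thesis unfolding ev_def
        by (rule map_cong[OF refl]) (simp add: sl iv)
    qed
    then show ?thesis using e[of "ev N {m}"] by (metis ev_len)
  qed
  have "key N h = image_mset (\<lambda>m. F (inv \<sigma> m)) (mset_set {..<N})"
    unfolding key_def F_def using e0 e1 by (intro image_mset_cong) auto
  also have "\<dots> = image_mset F (image_mset (inv \<sigma>) (mset_set {..<N}))"
    by (simp add: multiset.map_comp comp_def)
  also have "image_mset (inv \<sigma>) (mset_set {..<N}) = mset_set {..<N}"
    by (rule permutes_image_mset[OF permutes_inv[OF s]])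
  finally show ?thesis unfolding key_def F_def .
qed

lemma Kc_class: "Kc N (equiv_class N h) = key N h"
proof -
  have "h \<in> equiv_class N h" by (simp add: equiv_class_def fun_equiv_refl)
  then have "(SOME h'. h' \<in> equiv_class N h) \<in> equiv_class N h"
    using someI[where P="\<lambda>h'. h' \<in> equiv_class N h"] by blast
  then have "fun_equiv N (SOME h'. h' \<in> equiv_class N h) h" by (simp add: equiv_class_def)
  then show ?thesis unfolding Kc_def by (rule key_equiv)
qed

lemma key_form:
  fixes h :: "'a::field list \<Rightarrow> 'a" and b :: "nat \<Rightarrow> 'a" and n :: nat and r :: "nat \<Rightarrow> nat"
  assumes "\<And>ys. length ys = N \<Longrightarrow> h ys = (\<Sum>k<n. b k * ys ! r k) + c"
    and "\<And>k. k < n \<Longrightarrow> r k < N"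
  shows "key N h = image_mset (\<lambda>m. \<Sum>k\<in>{k. k<n \<and> r k = m}. b k) (mset_set {..<N})"
  unfolding key_def
proof (rule image_mset_cong)
  fix m assume "m \<in># mset_set {..<N}"
  have "h (ev N {m}) - h (ev N {}) = (\<Sum>k<n. b k * ev N {m} ! r k) - (\<Sum>k<n. b k * ev N {} ! r k)"
    using assms(1) by simp
  also have "\<dots> = (\<Sum>k<n. if r k = m then b k else 0)"
    unfolding sum_subtractf[symmetric] using assms(2) by (intro sum.cong) auto
  also have "\<dots> = sum b ({..<n} \<inter> {k. r k = m})" by (simp add: sum.inter_restrict)
  also have "{..<n} \<inter> {k. r k = m} = {k. k<n \<and> r k = m}" by auto
  finally show "h (ev N {m}) - h (ev N {}) = (\<Sum>k\<in>{k. k<n \<and> r k = m}. b k)" .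
qed

definition KM :: "nat \<Rightarrow> (nat \<Rightarrow> 'a::field) \<Rightarrow> nat \<Rightarrow> nat \<Rightarrow> 'a multiset" where
  "KM n b i j = image_mset b (mset_set ({..<n} - {i,j})) + {#b i + b j#}"

lemma KR_KM:
  assumes ij: "i < j" "j < n"
  shows "image_mset (\<lambda>m. \<Sum>k\<in>{k. k<n \<and> rr i j k = m}. b k) (mset_set {..<n-1}) = KM n b i j"
proof -
  define s where "s m = (if m < j then m else Suc m)" for m
  have fib_i: "{k. k<n \<and> rr i j k = i} = {i, j}" using ij by (auto simp: rr_def)
  have fib: "{k. k<n \<and> rr i j k = m} = {s m}" if "m < n - 1" "m \<noteq> i" for m
    using ij that by (auto simp: rr_def s_def)
  have "mset_set {..<n-1} = add_mset i (mset_set ({..<n-1} - {i}))"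
    using ij by (simp add: mset_set.remove)
  then have "image_mset (\<lambda>m. \<Sum>k\<in>{k. k<n \<and> rr i j k = m}. b k) (mset_set {..<n-1})
      = add_mset (b i + b j) (image_mset (\<lambda>m. \<Sum>k\<in>{k. k<n \<and> rr i j k = m}. b k) (mset_set ({..<n-1} - {i})))"
    using fib_i ij by simp
  also have "image_mset (\<lambda>m. \<Sum>k\<in>{k. k<n \<and> rr i j k = m}. b k) (mset_set ({..<n-1} - {i}))
      = image_mset (b \<circ> s) (mset_set ({..<n-1} - {i}))"
    using fib by (intro image_mset_cong) auto
  also have "\<dots> = image_mset b (image_mset s (mset_set ({..<n-1} - {i})))"
    by (simp add: multiset.map_comp)
  also have "image_mset s (mset_set ({..<n-1} - {i})) = mset_set (s ` ({..<n-1} - {i}))"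
    by (rule image_mset_mset_set) (auto simp: inj_on_def s_def split: if_splits)
  also have "s ` ({..<n-1} - {i}) = {..<n} - {i,j}"
  proof (rule set_eqI, rule iffI)
    fix t assume "t \<in> s ` ({..<n-1} - {i})"
    then show "t \<in> {..<n} - {i,j}" using ij by (auto simp: s_def split: if_splits)
  next
    fix t assume t: "t \<in> {..<n} - {i,j}"
    show "t \<in> s ` ({..<n-1} - {i})"
    proof (cases "t < j")
      case True
      then show ?thesis using t ij by (intro image_eqI[of _ _ t]) (auto simp: s_def)
    next
      case False
      then show ?thesis using t ij by (intro image_eqI[of _ _ "t - 1"]) (auto simp: s_def)
    qed
  qed
  finally show ?thesis unfolding KM_def by simp
qed

lemma deck_keys:
  assumes "\<And>i j. i < j \<Longrightarrow> j < n \<Longrightarrow> key (n-1) (id_minor h i j) = KM n b i j"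
  shows "image_mset (Kc (n-1)) (deck n h) = image_mset (\<lambda>(i,j). KM n b i j) (mset_set (PP n))"
  unfolding deck_def multiset.map_comp
  using finite_PP[of n] assms by (auto simp: PP_def Kc_class intro!: image_mset_cong)

lemma shift_sum:
  fixes F :: "'a::{finite,ab_group_add} \<Rightarrow> int"
  shows "(\<Sum>v\<in>UNIV. F (v - u)) = (\<Sum>v\<in>UNIV. F v)"
  by (rule sum.reindex_bij_witness[where i="\<lambda>v. v + u" and j="\<lambda>v. v - u"]) auto

lemma sum_delta_bool:
  fixes c :: "'a::finite"
  shows "(\<Sum>v\<in>UNIV. (of_bool (c = v) :: int)) = 1"
proof -
  have "(\<Sum>v\<in>UNIV. (of_bool (c = v) :: int)) = (\<Sum>v\<in>UNIV. if c = v then 1 else 0)"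
    by (rule sum.cong) auto
  also have "\<dots> = 1" by (simp add: sum.delta)
  finally show ?thesis .
qed

lemma l1_main:
  fixes \<alpha> \<beta> :: "'a::{finite,ab_group_add} \<Rightarrow> int" and K N :: int
  assumes pa: "\<And>u. \<alpha> u \<ge> 0" and pb: "\<And>u. \<beta> u \<ge> 0"
    and sa: "sum \<alpha> UNIV = N" and sb: "sum \<beta> UNIV = N"
    and eq: "\<And>v. K * \<alpha> v + (\<Sum>u\<in>UNIV. \<alpha> u * \<alpha> (v - u)) - (\<Sum>u\<in>UNIV. \<alpha> u * of_bool (u + u = v))
               = K * \<beta> v + (\<Sum>u\<in>UNIV. \<beta> u * \<beta> (v - u)) - (\<Sum>u\<in>UNIV. \<beta> u * of_bool (u + u = v))"
    and K: "K > 2 * N + 1"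
  shows "\<alpha> = \<beta>"
proof -
  define \<delta> where "\<delta> u = \<alpha> u - \<beta> u" for u
  define S where "S = (\<Sum>u\<in>UNIV. \<bar>\<delta> u\<bar>)"
  have N0: "N \<ge> 0" using sa pa by (metis sum_nonneg)
  have S0: "S \<ge> 0" unfolding S_def by (simp add: sum_nonneg)
  have pt: "\<bar>K * \<delta> v\<bar> \<le> (\<Sum>u\<in>UNIV. \<bar>\<delta> u\<bar> * \<alpha> (v - u)) + (\<Sum>u\<in>UNIV. \<beta> u * \<bar>\<delta> (v - u)\<bar>)
              + (\<Sum>u\<in>UNIV. \<bar>\<delta> u\<bar> * of_bool (u + u = v))" for v
  proof -
    have c1: "(\<Sum>u\<in>UNIV. \<alpha> u * \<alpha> (v - u)) - (\<Sum>u\<in>UNIV. \<beta> u * \<beta> (v - u))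
        = (\<Sum>u\<in>UNIV. \<delta> u * \<alpha> (v - u) + \<beta> u * \<delta> (v - u))"
      unfolding sum_subtractf[symmetric] \<delta>_def by (rule sum.cong) (auto simp: algebra_simps)
    have c2: "(\<Sum>u\<in>UNIV. \<alpha> u * of_bool (u + u = v)) - (\<Sum>u\<in>UNIV. \<beta> u * of_bool (u + u = v))
        = (\<Sum>u\<in>UNIV. \<delta> u * of_bool (u + u = v))"
      unfolding sum_subtractf[symmetric] \<delta>_def by (rule sum.cong) (auto simp: algebra_simps)
    have "K * \<delta> v = (\<Sum>u\<in>UNIV. \<delta> u * of_bool (u + u = v)) - (\<Sum>u\<in>UNIV. \<delta> u * \<alpha> (v - u) + \<beta> u * \<delta> (v - u))"
      using eq[of v] c1 c2 unfolding \<delta>_def by (simp add: algebra_simps)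
    then have "\<bar>K * \<delta> v\<bar> \<le> \<bar>\<Sum>u\<in>UNIV. \<delta> u * of_bool (u + u = v)\<bar> + \<bar>\<Sum>u\<in>UNIV. \<delta> u * \<alpha> (v - u) + \<beta> u * \<delta> (v - u)\<bar>"
      by simp
    also have "\<bar>\<Sum>u\<in>UNIV. \<delta> u * of_bool (u + u = v)\<bar> \<le> (\<Sum>u\<in>UNIV. \<bar>\<delta> u\<bar> * of_bool (u + u = v))"
      by (rule order_trans[OF sum_abs]) (simp add: abs_mult)
    also have "\<bar>\<Sum>u\<in>UNIV. \<delta> u * \<alpha> (v - u) + \<beta> u * \<delta> (v - u)\<bar>
        \<le> (\<Sum>u\<in>UNIV. \<bar>\<delta> u\<bar> * \<alpha> (v - u) + \<beta> u * \<bar>\<delta> (v - u)\<bar>)"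
    proof (rule order_trans[OF sum_abs], rule sum_mono)
      fix u
      show "\<bar>\<delta> u * \<alpha> (v - u) + \<beta> u * \<delta> (v - u)\<bar> \<le> \<bar>\<delta> u\<bar> * \<alpha> (v - u) + \<beta> u * \<bar>\<delta> (v - u)\<bar>"
        using pa[of "v - u"] pb[of u] abs_triangle_ineq[of "\<delta> u * \<alpha> (v - u)" "\<beta> u * \<delta> (v - u)"]
        by (simp add: abs_mult)
    qed
    finally show ?thesis by (simp add: sum.distrib)
  qed
  have "K * S = (\<Sum>v\<in>UNIV. \<bar>K * \<delta> v\<bar>)"
    unfolding S_def sum_distrib_left using K N0 by (intro sum.cong) (auto simp: abs_mult)
  also have "\<dots> \<le> (\<Sum>v\<in>UNIV. (\<Sum>u\<in>UNIV. \<bar>\<delta> u\<bar> * \<alpha> (v - u)) + (\<Sum>u\<in>UNIV. \<beta> u * \<bar>\<delta> (v - u)\<bar>)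
              + (\<Sum>u\<in>UNIV. \<bar>\<delta> u\<bar> * of_bool (u + u = v)))"
    by (rule sum_mono) (rule pt)
  also have "\<dots> = (\<Sum>u\<in>UNIV. \<Sum>v\<in>UNIV. \<bar>\<delta> u\<bar> * \<alpha> (v - u)) + (\<Sum>u\<in>UNIV. \<Sum>v\<in>UNIV. \<beta> u * \<bar>\<delta> (v - u)\<bar>)
              + (\<Sum>u\<in>UNIV. \<Sum>v\<in>UNIV. \<bar>\<delta> u\<bar> * of_bool (u + u = v))"
  proof -
    have sw: "(\<Sum>v\<in>UNIV. \<Sum>u\<in>UNIV. F u v) = (\<Sum>u\<in>UNIV. \<Sum>v\<in>UNIV. (F u v :: int))" for F :: "'a \<Rightarrow> 'a \<Rightarrow> int"
      by (rule sum.swap)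
    show ?thesis
      unfolding sum.distrib
      using sw[of "\<lambda>u v. \<bar>\<delta> u\<bar> * \<alpha> (v - u)"] sw[of "\<lambda>u v. \<beta> u * \<bar>\<delta> (v - u)\<bar>"]
        sw[of "\<lambda>u v. \<bar>\<delta> u\<bar> * of_bool (u + u = v)"]
      by (simp only:)
  qed
  also have "\<dots> = N * S + N * S + S"
  proof -
    have 1: "(\<Sum>u\<in>UNIV. \<Sum>v\<in>UNIV. \<bar>\<delta> u\<bar> * \<alpha> (v - u)) = N * S"
      unfolding sum_distrib_left[symmetric] S_def
      using shift_sum[of \<alpha>] sa by (simp add: sum_distrib_left mult.commute)
    have 2: "(\<Sum>u\<in>UNIV. \<Sum>v\<in>UNIV. \<beta> u * \<bar>\<delta> (v - u)\<bar>) = N * S"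
      unfolding sum_distrib_left[symmetric] S_def
      using shift_sum[of "\<lambda>w. \<bar>\<delta> w\<bar>"] sb by (simp add: sum_distrib_right[symmetric])
    have 3: "(\<Sum>u\<in>UNIV. \<Sum>v\<in>UNIV. \<bar>\<delta> u\<bar> * of_bool (u + u = v)) = S"
      unfolding sum_distrib_left[symmetric] S_def by (simp add: sum_delta_bool)
    show ?thesis using 1 2 3 by simp
  qed
  finally have "K * S \<le> (2 * N + 1) * S" by (simp add: algebra_simps)
  then have "(K - (2 * N + 1)) * S \<le> 0" by (simp add: algebra_simps)
  then have "S \<le> 0" using K S0 by (simp add: mult_le_0_iff)
  then have "S = 0" using S0 by simp
  then have "\<forall>u\<in>UNIV. \<bar>\<delta> u\<bar> = 0" unfolding S_def by (subst sum_nonneg_eq_0_iff[symmetric]) auto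
  then show ?thesis unfolding \<delta>_def by auto
qed

definition al :: "nat \<Rightarrow> (nat \<Rightarrow> 'a) \<Rightarrow> 'a \<Rightarrow> int" where
  "al n x v = (\<Sum>t<n. of_bool (x t = v))"

lemma count_img:
  "finite A \<Longrightarrow> int (count (image_mset x (mset_set A)) v) = (\<Sum>t\<in>A. of_bool (x t = v))"
  by (induction A rule: finite_induct) auto

lemma count_KM:
  fixes x :: "nat \<Rightarrow> 'a::field"
  assumes "i < j" "j < n"
  shows "int (count (KM n x i j) v) = al n x v - of_bool (x i = v) - of_bool (x j = v) + of_bool (x i + x j = v)"
proof -
  have "int (count (KM n x i j) v) = (\<Sum>t\<in>{..<n} - {i,j}. of_bool (x t = v)) + of_bool (x i + x j = v)"
    unfolding KM_def by (simp add: count_img)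
  also have "(\<Sum>t\<in>{..<n} - {i,j}. of_bool (x t = v)) = al n x v - of_bool (x i = v) - of_bool (x j = v)"
    unfolding al_def using split2[of i j n "\<lambda>t. (of_bool (x t = v) :: int)"] assms by simp
  finally show ?thesis .
qed

definition TT :: "nat \<Rightarrow> (nat \<Rightarrow> 'a::field) \<Rightarrow> 'a \<Rightarrow> int" where
  "TT n x v = (\<Sum>(i,j)\<in>PP n. int (count (KM n x i j) v))"

lemma TT_mset:
  "TT n x v = sum_mset (image_mset (\<lambda>M. int (count M v)) (image_mset (\<lambda>(i,j). KM n x i j) (mset_set (PP n))))"
  unfolding TT_def sum_unfold_sum_mset multiset.map_comp
  by (rule arg_cong[where f=sum_mset], rule image_mset_cong) auto

definition OPr :: "nat \<Rightarrow> (nat \<times> nat) set" where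
  "OPr n = Sigma {..<n} (\<lambda>i. {..<n} - {i})"

lemma PP_OPr:
  fixes F :: "nat \<Rightarrow> nat \<Rightarrow> int"
  shows "(\<Sum>(i,j)\<in>PP n. F i j + F j i) = (\<Sum>(i,j)\<in>OPr n. F i j)"
proof -
  have u: "OPr n = PP n \<union> (\<lambda>(i,j). (j,i)) ` PP n" by (auto simp: OPr_def PP_def image_def)
  have d: "PP n \<inter> (\<lambda>(i,j). (j,i)) ` PP n = {}" by (auto simp: PP_def)
  have inj: "inj_on (\<lambda>(i,j). (j,i)) (PP n)" by (auto simp: inj_on_def)
  have "(\<Sum>(i,j)\<in>OPr n. F i j) = (\<Sum>(i,j)\<in>PP n. F i j) + (\<Sum>(i,j)\<in>(\<lambda>(i,j). (j,i)) ` PP n. F i j)"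
    unfolding u by (rule sum.union_disjoint) (use d in auto)
  also have "(\<Sum>(i,j)\<in>(\<lambda>(i,j). (j,i)) ` PP n. F i j) = (\<Sum>(i,j)\<in>PP n. F j i)"
    by (subst sum.reindex[OF inj]) (simp add: case_prod_beta comp_def)
  finally show ?thesis by (simp add: sum.distrib case_prod_beta)
qed

lemma sum_OPr:
  fixes F :: "nat \<Rightarrow> nat \<Rightarrow> int"
  shows "(\<Sum>(i,j)\<in>OPr n. F i j) = (\<Sum>i<n. (\<Sum>j<n. F i j) - F i i)"
  unfolding OPr_def by (simp add: sum.Sigma[symmetric] sum_diff1)

definition QQ :: "nat \<Rightarrow> (nat \<Rightarrow> 'a::field) \<Rightarrow> 'a \<Rightarrow> int" where
  "QQ n x v = (\<Sum>i<n. \<Sum>j<n. of_bool (x i + x j = v))"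
definition DD :: "nat \<Rightarrow> (nat \<Rightarrow> 'a::field) \<Rightarrow> 'a \<Rightarrow> int" where
  "DD n x v = (\<Sum>i<n. of_bool (x i + x i = v))"

lemma TT_identity:
  fixes x :: "nat \<Rightarrow> 'a::field"
  shows "2 * TT n x v = (int n - 1) * (int n - 2) * al n x v + QQ n x v - DD n x v"
proof -
  define c where "c i j = al n x v - of_bool (x i = v) - of_bool (x j = v) + of_bool (x i + x j = v)" for i j
  have "TT n x v = (\<Sum>(i,j)\<in>PP n. c i j)"
    unfolding TT_def c_def by (rule sum.cong) (auto simp: PP_def count_KM)
  have sym: "c j i = c i j" for i j by (simp add: c_def add.commute)
  have "(\<Sum>(i,j)\<in>PP n. c i j + c j i) = (\<Sum>(i,j)\<in>PP n. 2 * c i j)"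
    by (rule sum.cong) (auto simp: sym)
  also have "\<dots> = 2 * (\<Sum>(i,j)\<in>PP n. c i j)" by (simp add: sum_distrib_left case_prod_beta)
  finally have "2 * TT n x v = (\<Sum>(i,j)\<in>PP n. c i j + c j i)" using \<open>TT n x v = _\<close> by simp
  also have "\<dots> = (\<Sum>i<n. (\<Sum>j<n. c i j) - c i i)" by (simp add: PP_OPr sum_OPr)
  also have "\<dots> = (\<Sum>i<n. int n * al n x v - int n * of_bool (x i = v) - al n x v
        + (\<Sum>j<n. of_bool (x i + x j = v)) - (al n x v - 2 * of_bool (x i = v) + of_bool (x i + x i = v)))"
    by (rule sum.cong) (auto simp: c_def sum.distrib sum_subtractf al_def right_diff_distrib)
  also have "\<dots> = int n * (int n * al n x v) - int n * al n x v - int n * al n x v + QQ n x v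
       - (int n * al n x v - 2 * al n x v + DD n x v)"
    by (simp add: sum.distrib sum_subtractf sum_distrib_left[symmetric] QQ_def DD_def al_def)
  also have "\<dots> = (int n - 1) * (int n - 2) * al n x v + QQ n x v - DD n x v"
    by (simp add: algebra_simps)
  finally show ?thesis .
qed

lemma sum_bool_mult:
  fixes c :: "'a::finite" and F :: "'a \<Rightarrow> int"
  shows "(\<Sum>u\<in>UNIV. of_bool (c = u) * F u) = F c"
proof -
  have "(\<Sum>u\<in>UNIV. of_bool (c = u) * F u) = (\<Sum>u\<in>UNIV. if c = u then F u else 0)"
    by (rule sum.cong) auto
  also have "\<dots> = F c" by (simp add: sum.delta)
  finally show ?thesis .
qed

lemma QQ_conv:
  fixes x :: "nat \<Rightarrow> 'a::{finite,field}"
  shows "QQ n x v = (\<Sum>u\<in>UNIV. al n x u * al n x (v - u))"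
proof -
  have "QQ n x v = (\<Sum>i<n. al n x (v - x i))"
    unfolding QQ_def al_def by (rule sum.cong[OF refl], rule sum.cong[OF refl]) (auto simp: eq_diff_eq add.commute)
  also have "\<dots> = (\<Sum>i<n. \<Sum>u\<in>UNIV. of_bool (x i = u) * al n x (v - u))"
    by (simp add: sum_bool_mult)
  also have "\<dots> = (\<Sum>u\<in>UNIV. \<Sum>i<n. of_bool (x i = u) * al n x (v - u))"
    by (rule sum.swap)
  also have "\<dots> = (\<Sum>u\<in>UNIV. al n x u * al n x (v - u))"
    by (simp add: al_def sum_distrib_right)
  finally show ?thesis .
qed

lemma DD_conv:
  fixes x :: "nat \<Rightarrow> 'a::{finite,field}"
  shows "DD n x v = (\<Sum>u\<in>UNIV. al n x u * of_bool (u + u = v))"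
proof -
  have "DD n x v = (\<Sum>i<n. \<Sum>u\<in>UNIV. of_bool (x i = u) * of_bool (u + u = v))"
    unfolding DD_def
    by (rule sum.cong[OF refl], rule sum_bool_mult[symmetric, where F="\<lambda>u. of_bool (u + u = v)"])
  also have "\<dots> = (\<Sum>u\<in>UNIV. \<Sum>i<n. of_bool (x i = u) * of_bool (u + u = v))"
    by (rule sum.swap)
  also have "\<dots> = (\<Sum>u\<in>UNIV. al n x u * of_bool (u + u = v))"
    by (simp add: al_def sum_distrib_right)
  finally show ?thesis .
qed

lemma sum_al:
  fixes x :: "nat \<Rightarrow> 'a::finite"
  shows "(\<Sum>u\<in>UNIV. al n x u) = int n"
proof -
  have "(\<Sum>u\<in>UNIV. al n x u) = (\<Sum>t<n. \<Sum>u\<in>UNIV. (of_bool (x t = u) :: int))"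
    unfolding al_def by (rule sum.swap)
  also have "\<dots> = int n" by (simp add: sum_delta_bool)
  finally show ?thesis .
qed

lemma al_nonneg: "al n x u \<ge> 0" unfolding al_def by (simp add: sum_nonneg)

lemma arith3:
  fixes z p m z' p' m' :: int
  assumes "z \<ge> 0" "p \<ge> 0" "m \<ge> 0" "z' \<ge> 0" "p' \<ge> 0" "m' \<ge> 0"
    "z + p + m = 4" "z' + p' + m' = 4"
    "5*z + z*z + 2*p*m = 5*z' + z'*z' + 2*p'*m'"
    "6*p + 2*z*p + m*m - m = 6*p' + 2*z'*p' + m'*m' - m'"
    "6*m + 2*z*m + p*p - p = 6*m' + 2*z'*m' + p'*p' - p'"
  shows "z = z' \<and> p = p' \<and> m = m'"
proof -
  have mm: "m = 4 - z - p" "m' = 4 - z' - p'" using assms by auto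
  have r1: "z = 0 \<or> z = 1 \<or> z = 2 \<or> z = 3 \<or> z = 4" using assms by arith
  have r2: "p = 0 \<or> p = 1 \<or> p = 2 \<or> p = 3 \<or> p = 4" using assms by arith
  have r3: "z' = 0 \<or> z' = 1 \<or> z' = 2 \<or> z' = 3 \<or> z' = 4" using assms by arith
  have r4: "p' = 0 \<or> p' = 1 \<or> p' = 2 \<or> p' = 3 \<or> p' = 4" using assms by arith
  show ?thesis using r1 r2 r3 r4 assms(3,6,9-11) unfolding mm
    by (elim disjE; simp)
qed

lemma arith2:
  fixes z p z' p' :: int
  assumes "z \<ge> 0" "p \<ge> 0" "z' \<ge> 0" "p' \<ge> 0" "z + p = 4" "z' + p' = 4"
    "6*p + 2*z*p = 6*p' + 2*z'*p'"
  shows "(z = z' \<and> p = p') \<or> (z = 1 \<and> z' = 0) \<or> (z = 0 \<and> z' = 1)"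
proof -
  have pp: "p = 4 - z" "p' = 4 - z'" using assms by auto
  have r1: "z = 0 \<or> z = 1 \<or> z = 2 \<or> z = 3 \<or> z = 4" using assms by arith
  have r3: "z' = 0 \<or> z' = 1 \<or> z' = 2 \<or> z' = 3 \<or> z' = 4" using assms by arith
  show ?thesis using r1 r3 assms(7) unfolding pp by (elim disjE; simp)
qed

lemma field3:
  assumes "card (UNIV::'a::{finite,field} set) = 3"
  shows "UNIV = {0,1,2::'a}" "(2::'a) \<noteq> 0" "(2::'a) \<noteq> 1" "(4::'a) = 1" "-1 = (2::'a)" "-2 = (1::'a)"
proof -
  have c01: "card {0,1::'a} = 2" by simp
  have "card (UNIV - {0,1::'a}) = 1"
    using assms c01 by (simp add: card_Diff_subset)
  then obtain c where c: "UNIV - {0,1::'a} = {c}" by (rule card_1_singletonE)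
  then have U: "UNIV = {0,1,c}" and c0: "c \<noteq> 0" and c1: "c \<noteq> 1" by auto
  have n21: "(2::'a) \<noteq> 1"
    by (metis add_cancel_right_right one_add_one zero_neq_one)
  have n20: "(2::'a) \<noteq> 0"
  proof
    assume h: "(2::'a) = 0"
    then have "(1::'a) + 1 = 0" by simp
    then have m1: "-1 = (1::'a)" by (simp add: eq_neg_iff_add_eq_0[symmetric])
    have "c + 1 \<in> {0,1,c}" using U by auto
    moreover have "c + 1 \<noteq> 0"
    proof
      assume "c + 1 = 0"
      then have "c = -1" by (simp add: eq_neg_iff_add_eq_0)
      then show False using m1 c1 by simp
    qed
    moreover have "c + 1 \<noteq> 1" using c0 by simp
    moreover have "c + 1 \<noteq> c" by simp
    ultimately show False by auto
  qed
  have "(2::'a) \<in> {0,1,c}" using U by auto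
  then have c2: "c = 2" using n20 n21 by auto
  have "(2::'a) + 1 \<in> {0,1,2}" using U c2 by auto
  moreover have "(2::'a) + 1 \<noteq> 1" using add_cancel_left_left[of "2::'a" 1] n20 by blast
  moreover have "(2::'a) + 1 \<noteq> 2" using add_cancel_right_right[of "2::'a" 1] by (metis zero_neq_one)
  ultimately have s3: "(2::'a) + 1 = 0" by auto
  show "UNIV = {0,1,2::'a}" using U c2 by simp
  show "(2::'a) \<noteq> 0" "(2::'a) \<noteq> 1" by fact+
  have "(2::'a) = -1" using s3 by (simp add: eq_neg_iff_add_eq_0)
  then show "-1 = (2::'a)" by simp
  have "(1::'a) + 2 = 0" using s3 by (simp add: add.commute)
  then have "(1::'a) = -2" by (simp add: eq_neg_iff_add_eq_0)
  then show "-2 = (1::'a)" by simp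
  have f: "(4::'a) = 3 + 1" by simp
  have "(3::'a) = 0" using s3 by simp
  then show "(4::'a) = 1" using f by simp
qed

lemma field2:
  assumes "card (UNIV::'a::{finite,field} set) = 2"
  shows "UNIV = {0,1::'a}" "(2::'a) = 0" "-1 = (1::'a)"
proof -
  have c01: "card {0,1::'a} = 2" by simp
  have "{0,1::'a} = UNIV"
    by (rule card_subset_eq) (use assms c01 in auto)
  then show U: "UNIV = {0,1::'a}" by simp
  have n21: "(2::'a) \<noteq> 1"
    by (metis add_cancel_right_right one_add_one zero_neq_one)
  have "(2::'a) \<in> {0,1}" using U by auto
  then show t: "(2::'a) = 0" using n21 by auto
  then have "(1::'a) + 1 = 0" by simp
  then show "-1 = (1::'a)" by (simp add: eq_neg_iff_add_eq_0[symmetric])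
qed

lemma recon43:
  fixes \<alpha> \<beta> :: "'a::{finite,field} \<Rightarrow> int"
  assumes c3: "card (UNIV::'a set) = 3"
    and pa: "\<And>u. \<alpha> u \<ge> 0" and pb: "\<And>u. \<beta> u \<ge> 0"
    and sa: "sum \<alpha> UNIV = 4" and sb: "sum \<beta> UNIV = 4"
    and E: "\<And>v. 6 * \<alpha> v + (\<Sum>u\<in>UNIV. \<alpha> u * \<alpha> (v - u)) - (\<Sum>u\<in>UNIV. \<alpha> u * of_bool (u + u = v))
               = 6 * \<beta> v + (\<Sum>u\<in>UNIV. \<beta> u * \<beta> (v - u)) - (\<Sum>u\<in>UNIV. \<beta> u * of_bool (u + u = v))"
  shows "\<alpha> = \<beta>"
proof -
  note f = field3[OF c3]
  have d: "(0::'a) \<noteq> 2" "(1::'a) \<noteq> 2" "(2::'a) \<noteq> 0" "(2::'a) \<noteq> 1" using f(2,3) by auto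
  have sU: "sum F UNIV = F 0 + F 1 + F 2" for F :: "'a \<Rightarrow> int"
    using d by (simp add: f(1) add.assoc)
  have e0: "5*\<alpha> 0 + \<alpha> 0*\<alpha> 0 + 2*\<alpha> 1*\<alpha> 2 = 5*\<beta> 0 + \<beta> 0*\<beta> 0 + 2*\<beta> 1*\<beta> 2"
    using E[of 0] d by (simp add: sU f(4-6) algebra_simps)
  have e1: "6*\<alpha> 1 + 2*\<alpha> 0*\<alpha> 1 + \<alpha> 2*\<alpha> 2 - \<alpha> 2 = 6*\<beta> 1 + 2*\<beta> 0*\<beta> 1 + \<beta> 2*\<beta> 2 - \<beta> 2"
    using E[of 1] d by (simp add: sU f(4-6) algebra_simps)
  have e2: "6*\<alpha> 2 + 2*\<alpha> 0*\<alpha> 2 + \<alpha> 1*\<alpha> 1 - \<alpha> 1 = 6*\<beta> 2 + 2*\<beta> 0*\<beta> 2 + \<beta> 1*\<beta> 1 - \<beta> 1"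
    using E[of 2] d by (simp add: sU f(4-6) algebra_simps)
  have "\<alpha> 0 = \<beta> 0 \<and> \<alpha> 1 = \<beta> 1 \<and> \<alpha> 2 = \<beta> 2"
    by (rule arith3[OF pa pa pa pb pb pb _ _ e0 e1 e2]) (use sa sb sU in auto)
  then show ?thesis using f(1) by (intro ext) (metis UNIV_I empty_iff insert_iff)
qed

lemma recon42:
  fixes \<alpha> \<beta> :: "'a::{finite,field} \<Rightarrow> int"
  assumes c2: "card (UNIV::'a set) = 2"
    and pa: "\<And>u. \<alpha> u \<ge> 0" and pb: "\<And>u. \<beta> u \<ge> 0"
    and sa: "sum \<alpha> UNIV = 4" and sb: "sum \<beta> UNIV = 4"
    and E: "\<And>v. 6 * \<alpha> v + (\<Sum>u\<in>UNIV. \<alpha> u * \<alpha> (v - u)) - (\<Sum>u\<in>UNIV. \<alpha> u * of_bool (u + u = v))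
               = 6 * \<beta> v + (\<Sum>u\<in>UNIV. \<beta> u * \<beta> (v - u)) - (\<Sum>u\<in>UNIV. \<beta> u * of_bool (u + u = v))"
  shows "\<alpha> = \<beta> \<or> (\<alpha> 0 = 1 \<and> \<beta> 0 = 0) \<or> (\<alpha> 0 = 0 \<and> \<beta> 0 = 1)"
proof -
  note f = field2[OF c2]
  have sU: "sum F UNIV = F 0 + F 1" for F :: "'a \<Rightarrow> int"
    by (simp add: f(1))
  have e1: "6*\<alpha> 1 + 2*\<alpha> 0*\<alpha> 1 = 6*\<beta> 1 + 2*\<beta> 0*\<beta> 1"
    using E[of 1] by (simp add: sU f(2,3) algebra_simps)
  have "(\<alpha> 0 = \<beta> 0 \<and> \<alpha> 1 = \<beta> 1) \<or> (\<alpha> 0 = 1 \<and> \<beta> 0 = 0) \<or> (\<alpha> 0 = 0 \<and> \<beta> 0 = 1)"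
    by (rule arith2[OF pa pa pb pb _ _ e1]) (use sa sb sU in auto)
  then show ?thesis
  proof (elim disjE)
    assume "\<alpha> 0 = \<beta> 0 \<and> \<alpha> 1 = \<beta> 1"
    then have "\<alpha> = \<beta>" using f(1) by (intro ext) (metis UNIV_I empty_iff insert_iff)
    then show ?thesis by simp
  qed auto
qed

lemma recon_eqs:
  fixes a b :: "nat \<Rightarrow> 'a::{finite,field}"
  assumes eq: "image_mset (\<lambda>(i,j). KM n a i j) (mset_set (PP n)) = image_mset (\<lambda>(i,j). KM n b i j) (mset_set (PP n))"
  shows "(int n - 1) * (int n - 2) * al n a v + (\<Sum>u\<in>UNIV. al n a u * al n a (v - u)) - (\<Sum>u\<in>UNIV. al n a u * of_bool (u + u = v))
       = (int n - 1) * (int n - 2) * al n b v + (\<Sum>u\<in>UNIV. al n b u * al n b (v - u)) - (\<Sum>u\<in>UNIV. al n b u * of_bool (u + u = v))"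
proof -
  have "TT n a v = TT n b v" unfolding TT_mset eq ..
  then have "2 * TT n a v = 2 * TT n b v" by simp
  then show ?thesis unfolding TT_identity QQ_conv DD_conv .
qed

lemma q2_extra:
  fixes a b :: "nat \<Rightarrow> 'a::{finite,field}"
  assumes c2: "card (UNIV::'a set) = 2" and n4: "n = 4"
    and eq: "image_mset (\<lambda>(i,j). KM n a i j) (mset_set (PP n)) = image_mset (\<lambda>(i,j). KM n b i j) (mset_set (PP n))"
    and a0: "al n a 0 = 1" and b0: "al n b 0 = 0"
  shows False
proof -
  note f = field2[OF c2]
  have bt: "b t = 1" if "t < n" for t
  proof -
    have "\<forall>t\<in>{..<n}. (of_bool (b t = 0) :: int) = 0"
      using b0 unfolding al_def by (subst sum_nonneg_eq_0_iff[symmetric]) auto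
    then have "b t \<noteq> 0" using that by auto
    moreover have "b t \<in> {0,1}" using f(1) by auto
    ultimately show ?thesis by auto
  qed
  obtain t0 where t0: "t0 < n" "a t0 = 0"
  proof -
    have "\<not> (\<forall>t\<in>{..<n}. (of_bool (a t = 0) :: int) = 0)"
    proof
      assume "\<forall>t\<in>{..<n}. (of_bool (a t = 0) :: int) = 0"
      then have "al n a 0 = 0" unfolding al_def by simp
      then show False using a0 by simp
    qed
    then obtain t where "t < n" "a t = 0" by auto
    then show ?thesis using that by blast
  qed
  define j0 where "j0 = (if t0 = 0 then 1 else 0::nat)"
  have j0: "j0 < n" "j0 \<noteq> t0" using n4 by (auto simp: j0_def)
  define i where "i = min t0 j0"
  define j where "j = max t0 j0"
  have ij: "i < j" "j < n" using j0 t0 by (auto simp: i_def j_def)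
  have ijP: "(i, j) \<in> PP n" using ij by (simp add: PP_def)
  have "KM n a i j \<in># image_mset (\<lambda>(i,j). KM n a i j) (mset_set (PP n))"
    unfolding in_image_mset
    by (rule image_eqI[where x="(i,j)"]) (use ijP in simp_all)
  then have "KM n a i j \<in># image_mset (\<lambda>(i,j). KM n b i j) (mset_set (PP n))" using eq by simp
  then obtain p where p: "p \<in> PP n" and e: "KM n a i j = (\<lambda>(i,j). KM n b i j) p"
    unfolding in_image_mset by (auto simp del: finite_PP simp add: finite_PP[of n])
  obtain k l where pkl: "p = (k, l)" by (cases p)
  have kl': "k < l" "l < n" using p pkl by (auto simp: PP_def)
  have e': "KM n a i j = KM n b k l" using e pkl by simp
  have "int (count (KM n a i j) 0) = 0"
  proof -
    have "int (count (KM n a i j) 0) = al n a 0 - of_bool (a i = 0) - of_bool (a j = 0) + of_bool (a i + a j = 0)"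
      using ij by (rule count_KM)
    also have "\<dots> = 0"
    proof (cases "t0 < j0")
      case True
      then have "i = t0" "j = j0" by (auto simp: i_def j_def)
      then show ?thesis using t0(2) a0 by simp
    next
      case False
      then have "i = j0" "j = t0" by (auto simp: i_def j_def)
      then show ?thesis using t0(2) a0 by simp
    qed
    finally show ?thesis .
  qed
  moreover have "int (count (KM n b k l) 0) = 1"
  proof -
    have "int (count (KM n b k l) 0) = al n b 0 - of_bool (b k = 0) - of_bool (b l = 0) + of_bool (b k + b l = 0)"
      using kl' by (rule count_KM)
    also have "\<dots> = 1" using b0 bt[of k] bt[of l] kl' f(2) by simp
    finally show ?thesis .
  qed
  ultimately show False using e' by simp
qed

lemma card_ge2: "card (UNIV::'a::{finite,field} set) \<ge> 2"
proof -
  have "card {0,1::'a} \<le> card (UNIV::'a set)" by (rule card_mono) auto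
  then show ?thesis by simp
qed

lemma recon:
  fixes a b :: "nat \<Rightarrow> 'a::{finite,field}"
  assumes n4: "4 \<le> n" and nq: "card (UNIV::'a set) < n"
    and eq: "image_mset (\<lambda>(i,j). KM n a i j) (mset_set (PP n)) = image_mset (\<lambda>(i,j). KM n b i j) (mset_set (PP n))"
  shows "al n a = al n b"
proof (cases "n \<ge> 5")
  case True
  have K: "(int n - 1) * (int n - 2) > 2 * int n + 1"
  proof -
    have "(int n - 1) * (int n - 2) \<ge> 4 * (int n - 2)"
      using True by (intro mult_right_mono) auto
    moreover have "2 * int n + 1 < 4 * (int n - 2)" using True by simp
    ultimately show ?thesis by linarith
  qed
  show ?thesis
    by (rule l1_main[OF al_nonneg al_nonneg sum_al sum_al recon_eqs[OF eq] K])
next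
  case False
  then have n: "n = 4" using n4 by simp
  have E: "6 * al n a v + (\<Sum>u\<in>UNIV. al n a u * al n a (v - u)) - (\<Sum>u\<in>UNIV. al n a u * of_bool (u + u = v))
       = 6 * al n b v + (\<Sum>u\<in>UNIV. al n b u * al n b (v - u)) - (\<Sum>u\<in>UNIV. al n b u * of_bool (u + u = v))" for v
    using recon_eqs[OF eq, of v] n by simp
  have s: "sum (al n a) UNIV = 4" "sum (al n b) UNIV = 4"
    using sum_al[of n a] sum_al[of n b] n by simp_all
  have "card (UNIV::'a set) = 2 \<or> card (UNIV::'a set) = 3" using card_ge2[where 'a='a] nq n by linarith
  then show ?thesis
  proof
    assume "card (UNIV::'a set) = 3"
    then show ?thesis by (rule recon43[OF _ al_nonneg al_nonneg s E])
  next
    assume c2: "card (UNIV::'a set) = 2"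
    have "al n a = al n b \<or> (al n a 0 = 1 \<and> al n b 0 = 0) \<or> (al n a 0 = 0 \<and> al n b 0 = 1)"
      by (rule recon42[OF c2 al_nonneg al_nonneg s E])
    then show ?thesis
    proof (elim disjE)
      assume "al n a 0 = 1 \<and> al n b 0 = 0"
      then show ?thesis using q2_extra[OF c2 n eq] by simp
    next
      assume "al n a 0 = 0 \<and> al n b 0 = 1"
      then show ?thesis using q2_extra[OF c2 n eq[symmetric]] by simp
    qed
  qed
qed

lemma al_mset:
  assumes "al n a = al n b"
  shows "image_mset a (mset_set {..<n}) = image_mset b (mset_set {..<n})"
proof (rule multiset_eqI)
  fix v
  have "int (count (image_mset a (mset_set {..<n})) v) = al n a v" unfolding al_def by (simp add: count_img)
  also have "\<dots> = al n b v" using assms by simp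
  also have "\<dots> = int (count (image_mset b (mset_set {..<n})) v)" unfolding al_def by (simp add: count_img)
  finally show "count (image_mset a (mset_set {..<n})) v = count (image_mset b (mset_set {..<n})) v" by simp
qed

theorem mainTheorem14:
  fixes f g :: "'a::{finite, field} list \<Rightarrow> 'a" and n :: nat
  assumes "n \<ge> max (card (UNIV :: 'a set)) 3 + 1"
    and "affine_fun n f"
    and "deck n g = deck n f"
  shows "fun_equiv n g f"
proof -
  have n4: "4 \<le> n" and nq: "card (UNIV::'a set) < n" using assms(1) by auto
  obtain a c where fa: "\<And>xs. length xs = n \<Longrightarrow> f xs = (\<Sum>i<n. a i * xs!i) + c"
    using assms(2) unfolding affine_fun_def by blast
  have gmin: "\<exists>r. (\<forall>t<n. r t < n - 1) \<and> (\<forall>ys. length ys = n - 1 \<longrightarrow> id_minor g i j ys = (\<Sum>t<n. a t * ys ! r t) + c)"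
    if ij: "i < j" "j < n" for i j
  proof -
    obtain k l where kl: "k < l" "l < n" and fe: "fun_equiv (n-1) (id_minor g i j) (id_minor f k l)"
      using deck_member[OF assms(3) ij] by blast
    have ex: "\<exists>\<sigma>. \<sigma> permutes {..<n-1} \<and> (\<forall>ys. length ys = n - 1 \<longrightarrow> id_minor g i j ys = (\<Sum>t<n. a t * ys ! \<sigma> (rr k l t)) + c)"
      by (rule equiv_subst[OF fe]) (auto simp: minor_form[OF fa kl] intro: rr_lt'[OF _ kl])
    obtain \<sigma> where s: "\<sigma> permutes {..<n-1}"
      and h: "\<forall>ys. length ys = n - 1 \<longrightarrow> id_minor g i j ys = (\<Sum>t<n. a t * ys ! \<sigma> (rr k l t)) + c"
      using ex by blast
    have "\<sigma> (rr k l t) < n - 1" if "t < n" for t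
      using permutes_in_image[OF s, of "rr k l t"] rr_lt[OF that kl] by simp
    then show ?thesis using h by (intro exI[of _ "\<lambda>t. \<sigma> (rr k l t)"]) auto
  qed
  have aff: "affine_fun (n-1) (id_minor g i j)" if ij: "i < j" "j < n" for i j
  proof -
    obtain r where r: "\<forall>t<n. r t < n - 1" "\<forall>ys. length ys = n - 1 \<longrightarrow> id_minor g i j ys = (\<Sum>t<n. a t * ys ! r t) + c"
      using gmin[OF ij] by blast
    show ?thesis by (rule affine_subst[where r=r and a=a and c=c and n=n]) (use r in auto)
  qed
  have G0: "g (ev n {}) = c"
  proof -
    have l: "length (ev n {} :: 'a list) = n" by simp
    have "g (ev n {}) = id_minor g 0 1 (del 1 (ev n {}))"
      using minor_del[OF l, of 0 1 g] n4 by simp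
    also obtain r where r: "\<forall>t<n. r t < n - 1" "\<forall>ys. length ys = n - 1 \<longrightarrow> id_minor g 0 1 ys = (\<Sum>t<n. a t * ys ! r t) + c"
      using gmin[of 0 1] n4 by auto
    have "id_minor g 0 1 (del 1 (ev n {})) = (\<Sum>t<n. a t * (del 1 (ev n {}) ! r t)) + c"
      using r(2) del_len[OF l, of 1] n4 by auto
    also have "(\<Sum>t<n. a t * (del 1 (ev n {}) ! r t)) = 0"
      using r(1) del_nth[OF l, of 1] n4 by (intro sum.neutral) auto
    finally show ?thesis by simp
  qed
  define b where "b t = g (ev n {t}) - c" for t
  have gb: "g xs = (\<Sum>i<n. b i * xs!i) + c" if "length xs = n" for xs
    using g_affine[OF n4 nq aff that] unfolding b_def G0 by simp
  have kg: "key (n-1) (id_minor g i j) = KM n b i j" if "i < j" "j < n" for i j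
  proof -
    have "key (n-1) (id_minor g i j) = image_mset (\<lambda>m. \<Sum>k\<in>{k. k<n \<and> rr i j k = m}. b k) (mset_set {..<n-1})"
      by (rule key_form[where c=c]) (use minor_form[OF gb that] rr_lt[OF _ that] in auto)
    then show ?thesis using KR_KM[OF that] by simp
  qed
  have kf: "key (n-1) (id_minor f i j) = KM n a i j" if "i < j" "j < n" for i j
  proof -
    have "key (n-1) (id_minor f i j) = image_mset (\<lambda>m. \<Sum>k\<in>{k. k<n \<and> rr i j k = m}. a k) (mset_set {..<n-1})"
      by (rule key_form[where c=c]) (use minor_form[OF fa that] rr_lt[OF _ that] in auto)
    then show ?thesis using KR_KM[OF that] by simp
  qed
  have "image_mset (\<lambda>(i,j). KM n b i j) (mset_set (PP n)) = image_mset (\<lambda>(i,j). KM n a i j) (mset_set (PP n))"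
  proof -
    have k1: "image_mset (Kc (n-1)) (deck n g) = image_mset (\<lambda>(i,j). KM n b i j) (mset_set (PP n))"
      by (rule deck_keys) (rule kg)
    have k2: "image_mset (Kc (n-1)) (deck n f) = image_mset (\<lambda>(i,j). KM n a i j) (mset_set (PP n))"
      by (rule deck_keys) (rule kf)
    show ?thesis using k1 k2 unfolding assms(3) by (rule subst)
  qed
  then have "al n b = al n a" by (rule recon[OF n4 nq])
  then have "image_mset a (mset_set {..<n}) = image_mset b (mset_set {..<n})" by (intro al_mset) simp
  then obtain p where p: "p permutes {..<n}" and ab: "\<forall>x\<in>{..<n}. a x = b (p x)"
    by (rule image_mset_eq_implies_permutes[OF finite_lessThan])
  show ?thesis unfolding fun_equiv_def
  proof (intro exI conjI allI impI)
    show "p permutes {..<n}" by (rule p)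
    fix xs :: "'a list" assume xs: "length xs = n"
    have pl: "p k < n" if "k < n" for k using permutes_in_image[OF p, of k] that by simp
    have "f (map (\<lambda>k. xs ! p k) [0..<n]) = (\<Sum>k<n. a k * (map (\<lambda>k. xs ! p k) [0..<n]) ! k) + c"
      by (rule fa) simp
    also have "(\<Sum>k<n. a k * (map (\<lambda>k. xs ! p k) [0..<n]) ! k) = (\<Sum>k<n. a k * xs ! p k)"
      by (rule sum.cong) auto
    also have "(\<Sum>k<n. a k * xs ! p k) = (\<Sum>k<n. b (p k) * xs ! p k)"
      by (rule sum.cong) (use ab in auto)
    also have "\<dots> = (\<Sum>k<n. b k * xs ! k)"
      using sum.permute[OF p, of "\<lambda>k. b k * xs ! k"] by (simp add: comp_def)
    finally show "g xs = f (map (\<lambda>k. xs ! p k) [0..<n])" using gb[OF xs] by simp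
  qed
qed

end
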